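(* Let $\mu$ be the local limit of a locally convergent sequence of finite graphs, and let $\mathcal E$ be a local event on rooted graphs. Then for every $\delta>0$, $r\in\mathbb N$ and $p\in[0,1]$ there is a constant $D\in\mathbb N$ (depending on $\delta$ and $r$) such that $$\Pr\big(\exists u\in\mathcal N_r(o;G)\text{ with }\mathcal E(G(p),u)\big)\le D\,\Pr\big(\mathcal E(G(p),o)\big)+\delta,$$ where probabilities are over $(G,o)\sim\mu$ and the independent percolation.
   Context: $\mathcal N_r(v;G)$ is the subgraph induced by vertices within graph distance $r$ of $v$. A local event $\mathcal E$ is a set of rooted graphs such that whether $(G,u)\in\mathcal E$ (written $\mathcal E(G,u)$) is determined by the isomorphism class of $\mathcal N_R(u;G)$ rooted at $u$, for some fixed $R$. $G(p)$: independent bond percolation with retention probability $p$. Local convergence: $\mathcal G^*$ is the space of rooted locally finite graphs modulo root-preserving isomorphism with the local metric; $G_n$ ($n$ vertices) converges locally to a probability measure $\mu$ on $\mathcal G^*$ if $\frac1n\sum_v f(G_n,v)\to\mathbb E_\mu[f]$ in probability for all bounded continuous $f$ (such limits are unimodular). *)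

theory Defs
  imports "HOL-Probability.Probability"
begin

type_synonym graph = "nat \<Rightarrow> nat \<Rightarrow> bool"
type_synonym rgraph = "graph \<times> nat"

definition lf_graph :: "graph \<Rightarrow> bool" where
  "lf_graph G \<longleftrightarrow> (\<forall>u v. G u v \<longleftrightarrow> G v u) \<and> (\<forall>u. \<not> G u u) \<and> (\<forall>u. finite {v. G u v})"

definition ball :: "graph \<Rightarrow> nat \<Rightarrow> nat \<Rightarrow> nat set" where
  "ball G r x = {v. \<exists>k\<le>r. (G ^^ k) x v}"

definition ball_iso :: "nat \<Rightarrow> rgraph \<Rightarrow> rgraph \<Rightarrow> bool" where
  "ball_iso r X Y \<longleftrightarrow>
     (\<exists>\<phi>. bij_betw \<phi> (ball (fst X) r (snd X)) (ball (fst Y) r (snd Y)) \<and> \<phi> (snd X) = snd Y \<and>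
        (\<forall>u\<in>ball (fst X) r (snd X). \<forall>v\<in>ball (fst X) r (snd X).
            fst X u v \<longleftrightarrow> fst Y (\<phi> u) (\<phi> v)))"

definition local_event :: "(rgraph \<Rightarrow> bool) \<Rightarrow> bool" where
  "local_event E \<longleftrightarrow>
     (\<exists>R. \<forall>X Y. lf_graph (fst X) \<longrightarrow> lf_graph (fst Y) \<longrightarrow> ball_iso R X Y \<longrightarrow> (E X \<longleftrightarrow> E Y))"

text \<open>Continuity w.r.t. the local metric (d < 1/(1+r) iff the r-balls are rooted isomorphic).\<close>
definition locally_continuous :: "(rgraph \<Rightarrow> real) \<Rightarrow> bool" where
  "locally_continuous f \<longleftrightarrow>
     (\<forall>X. lf_graph (fst X) \<longrightarrow> (\<forall>\<epsilon>>0. \<exists>r. \<forall>Y. lf_graph (fst Y) \<longrightarrow> ball_iso r X Y \<longrightarrow>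
          \<bar>f X - f Y\<bar> < \<epsilon>))"

definition bounded_on_lf :: "(rgraph \<Rightarrow> real) \<Rightarrow> bool" where
  "bounded_on_lf f \<longleftrightarrow> (\<exists>B. \<forall>X. lf_graph (fst X) \<longrightarrow> \<bar>f X\<bar> \<le> B)"

definition finite_graph :: "nat \<Rightarrow> graph \<Rightarrow> bool" where
  "finite_graph n G \<longleftrightarrow> lf_graph G \<and> (\<forall>u v. G u v \<longrightarrow> u < n \<and> v < n)"

definition rg_space :: "rgraph measure" where
  "rg_space = restrict_space
     ((\<Pi>\<^sub>M u\<in>UNIV. \<Pi>\<^sub>M v\<in>UNIV. count_space UNIV) \<Otimes>\<^sub>M count_space UNIV)
     {X. lf_graph (fst X)}"

definition local_limit :: "rgraph measure \<Rightarrow> bool" where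
  "local_limit \<mu> \<longleftrightarrow>
     (\<exists>Gs. (\<forall>n. finite_graph n (Gs n)) \<and>
        (\<forall>f. locally_continuous f \<and> bounded_on_lf f \<longrightarrow>
           (\<lambda>n. (\<Sum>v<n. f (Gs n, v)) / real n) \<longlonglongrightarrow> integral\<^sup>L \<mu> f))"

text \<open>Independent retention variables; the edge {u,v} uses the variable at (min u v, max u v).\<close>
definition perc_measure :: "real \<Rightarrow> graph measure" where
  "perc_measure p = (\<Pi>\<^sub>M u\<in>UNIV. \<Pi>\<^sub>M v\<in>UNIV. measure_pmf (bernoulli_pmf p))"

definition perc_graph :: "graph \<Rightarrow> graph \<Rightarrow> graph" where
  "perc_graph G \<omega> = (\<lambda>u v. G u v \<and> \<omega> (min u v) (max u v))"

end

theory Submission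
  imports Defs
begin


lemma relpowp_Suc_E: "(G ^^ Suc k) x v \<Longrightarrow> (\<And>w. (G ^^ k) x w \<Longrightarrow> G w v \<Longrightarrow> P) \<Longrightarrow> P"
  by auto

lemma ball_root[simp]: "x \<in> ball G r x"
  unfolding ball_def by (intro CollectI exI[of _ 0]) auto

lemma ball_step: "w \<in> ball G m z \<Longrightarrow> G w v \<Longrightarrow> v \<in> ball G (Suc m) z"
  unfolding ball_def
proof clarify
  fix k assume "k \<le> m" "(G ^^ k) z w" "G w v"
  then have "(G ^^ Suc k) z v" by auto
  then show "\<exists>k\<le>Suc m. (G ^^ k) z v" using \<open>k \<le> m\<close> by (intro exI[of _ "Suc k"]) auto
qed

lemma ball_mono: "m \<le> m' \<Longrightarrow> ball G m z \<subseteq> ball G m' z"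
  unfolding ball_def using order_trans by blast

lemma ball_trans: "v \<in> ball G a u \<Longrightarrow> u \<in> ball G b z \<Longrightarrow> v \<in> ball G (b+a) z"
  unfolding ball_def
proof clarify
  fix k j assume "k \<le> a" "(G ^^ k) u v" "j \<le> b" "(G ^^ j) z u"
  then have "(G ^^ (j + k)) z v" by (auto simp: relpowp_add)
  with \<open>k\<le>a\<close> \<open>j\<le>b\<close> show "\<exists>k\<le>b + a. (G ^^ k) z v" by (intro exI[of _ "j+k"]) auto
qed

lemma relpowp_sym: assumes "\<And>u v. G u v \<Longrightarrow> G v u" shows "(G ^^ k) x y \<Longrightarrow> (G ^^ k) y x"
proof (induction k arbitrary: y)
  case 0 then show ?case by simp
next
  case (Suc k)
  from Suc.prems obtain w where w: "(G ^^ k) x w" "G w y" by auto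
  have "(G ^^ (Suc 0 + k)) y x"
    unfolding relpowp_add using Suc.IH[OF w(1)] assms[OF w(2)] by auto
  then show ?case by simp
qed

lemma ball_sym: "lf_graph G \<Longrightarrow> v \<in> ball G a u \<Longrightarrow> u \<in> ball G a v"
  unfolding ball_def lf_graph_def using relpowp_sym[of G] by blast

lemma ball_Suc_sub: "ball G (Suc r) z \<subseteq> ball G r z \<union> (\<Union>w\<in>ball G r z. {v. G w v})"
proof
  fix v assume "v \<in> ball G (Suc r) z"
  then obtain k where k: "k \<le> Suc r" "(G ^^ k) z v" unfolding ball_def by auto
  show "v \<in> ball G r z \<union> (\<Union>w\<in>ball G r z. {v. G w v})"
  proof (cases "k \<le> r")
    case True then show ?thesis using k unfolding ball_def by auto
  next
    case False then have "k = Suc r" using k by auto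
    with k obtain w where "(G ^^ r) z w" "G w v" by auto
    then show ?thesis unfolding ball_def by auto
  qed
qed

lemma finite_ball: assumes "lf_graph G" shows "finite (ball G r z)"
proof (induction r)
  case 0
  have "ball G 0 z = {z}" unfolding ball_def by auto
  then show ?case by simp
next
  case (Suc r)
  have "\<forall>w. finite {v. G w v}" using assms unfolding lf_graph_def by auto
  then show ?case using Suc by (intro finite_subset[OF ball_Suc_sub]) auto
qed

lemma ball_finite_graph: assumes "finite_graph n G" "x < n" shows "ball G r x \<subseteq> {..<n}"
proof
  fix v assume "v \<in> ball G r x"
  then obtain k where k: "(G ^^ k) x v" unfolding ball_def by auto
  show "v \<in> {..<n}"
  proof (cases k)
    case 0 then show ?thesis using k assms by auto
  next
    case (Suc j) then obtain w where "G w v" using k by auto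
    then show ?thesis using assms unfolding finite_graph_def by auto
  qed
qed

lemma lf_perc: "lf_graph G \<Longrightarrow> lf_graph (perc_graph G \<omega>)"
  unfolding lf_graph_def perc_graph_def
  by (auto simp: min.commute max.commute intro: finite_subset[rotated])



lemma C1:
  assumes Hs: "\<forall>u v. H u v \<longrightarrow> G u v"
    and Hp: "\<forall>u\<in>ball G K z. \<forall>v\<in>ball G K z. H u v \<longrightarrow> H' (\<phi> u) (\<phi> v)"
    and x: "x \<in> ball G a z"
  shows "a + k \<le> K \<Longrightarrow> (H ^^ k) x v \<Longrightarrow> v \<in> ball G (a+k) z \<and> (H' ^^ k) (\<phi> x) (\<phi> v)"
proof (induction k arbitrary: v)
  case 0 then show ?case using x by simp
next
  case (Suc k)
  from Suc.prems(2) obtain w where w: "(H ^^ k) x w" "H w v" by auto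
  from Suc.IH[OF _ w(1)] Suc.prems(1) have IH: "w \<in> ball G (a+k) z" "(H' ^^ k) (\<phi> x) (\<phi> w)" by auto
  have v: "v \<in> ball G (a + Suc k) z" using ball_step[OF IH(1)] Hs w(2) by auto
  have "w \<in> ball G K z" using IH(1) ball_mono[of "a+k" K G z] Suc.prems(1) by auto
  moreover have "v \<in> ball G K z" using v ball_mono[of "a+Suc k" K G z] Suc.prems(1) by auto
  ultimately have "H' (\<phi> w) (\<phi> v)" using Hp w(2) by auto
  with IH(2) have "(H' ^^ Suc k) (\<phi> x) (\<phi> v)" by auto
  with v show ?case by auto
qed

lemma forth:
  assumes Hs: "\<forall>u v. H u v \<longrightarrow> G u v"
    and Hp: "\<forall>u\<in>ball G K z. \<forall>v\<in>ball G K z. H u v \<longrightarrow> H' (\<phi> u) (\<phi> v)"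
    and Gp: "\<forall>u\<in>ball G K z. \<forall>v\<in>ball G K z. G u v \<longrightarrow> G' (\<phi> u) (\<phi> v)"
    and z: "\<phi> z = z'"
    and x: "x \<in> ball G a z" and aR: "a + R \<le> K"
  shows "ball H R x \<subseteq> ball G K z" "\<phi> ` ball H R x \<subseteq> ball H' R (\<phi> x)" "\<phi> x \<in> ball G' a z'"
proof -
  show "ball H R x \<subseteq> ball G K z"
  proof
    fix v assume "v \<in> ball H R x"
    then obtain k where "k \<le> R" "(H ^^ k) x v" unfolding ball_def by auto
    then have "v \<in> ball G (a+k) z" using C1[of H G K z H' \<phi> x a, OF Hs Hp x, of k v] aR by auto
    then show "v \<in> ball G K z" using ball_mono[of "a+k" K G z] aR \<open>k\<le>R\<close> by auto
  qed
  show "\<phi> ` ball H R x \<subseteq> ball H' R (\<phi> x)"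
  proof
    fix v' assume "v' \<in> \<phi> ` ball H R x"
    then obtain v where v: "v' = \<phi> v" "v \<in> ball H R x" by auto
    then obtain k where "k \<le> R" "(H ^^ k) x v" unfolding ball_def by auto
    then have "(H' ^^ k) (\<phi> x) (\<phi> v)" using C1[of H G K z H' \<phi> x a, OF Hs Hp x, of k v] aR by auto
    then show "v' \<in> ball H' R (\<phi> x)" using v \<open>k\<le>R\<close> unfolding ball_def by auto
  qed
  show "\<phi> x \<in> ball G' a z'"
  proof -
    from x obtain k where k: "k \<le> a" "(G ^^ k) z x" unfolding ball_def by auto
    have "(G' ^^ k) (\<phi> z) (\<phi> x)"
      using C1[of G G K z G' \<phi> z 0 k x] k aR Gp by auto
    then show ?thesis using k z unfolding ball_def by auto
  qed
qed

lemma transfer: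
  assumes lfG: "lf_graph G" and lfG': "lf_graph G'"
    and bij: "bij_betw \<phi> (ball G K z) (ball G' K z')" and z: "\<phi> z = z'"
    and adj: "\<forall>u\<in>ball G K z. \<forall>v\<in>ball G K z. G u v \<longleftrightarrow> G' (\<phi> u) (\<phi> v)"
    and om: "\<forall>u\<in>ball G K z. \<forall>v\<in>ball G K z. G u v \<longrightarrow>
              \<omega> (min u v) (max u v) = \<omega>' (min (\<phi> u) (\<phi> v)) (max (\<phi> u) (\<phi> v))"
    and x: "x \<in> ball G a z" and aR: "a + R \<le> K"
  shows "ball_iso R (perc_graph G \<omega>, x) (perc_graph G' \<omega>', \<phi> x)"
proof -
  define B where "B = ball G K z"
  define B' where "B' = ball G' K z'"
  define \<psi> where "\<psi> = inv_into B \<phi>"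
  have bij': "bij_betw \<psi> B' B" unfolding \<psi>_def B_def B'_def by (rule bij_betw_inv_into[OF bij])
  have zB: "z \<in> B" unfolding B_def by simp
  have psiphi: "\<And>u. u \<in> B \<Longrightarrow> \<psi> (\<phi> u) = u" unfolding \<psi>_def
    using bij B_def bij_betw_inv_into_left by fastforce
  have phipsi: "\<And>u'. u' \<in> B' \<Longrightarrow> \<phi> (\<psi> u') = u'" unfolding \<psi>_def
    using bij B_def B'_def bij_betw_inv_into_right by fastforce
  have phiB: "\<And>u. u \<in> B \<Longrightarrow> \<phi> u \<in> B'" using bij B_def B'_def bij_betwE by blast
  have psiB: "\<And>u'. u' \<in> B' \<Longrightarrow> \<psi> u' \<in> B" using bij' bij_betwE by blast
  have z': "\<psi> z' = z" using psiphi[OF zB] z by simp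
  define H where "H = perc_graph G \<omega>"
  define H' where "H' = perc_graph G' \<omega>'"
  have HG: "\<forall>u v. H u v \<longrightarrow> G u v" "\<forall>u v. H' u v \<longrightarrow> G' u v" unfolding H_def H'_def perc_graph_def by auto
  have adj': "\<forall>u\<in>B'. \<forall>v\<in>B'. G' u v \<longleftrightarrow> G (\<psi> u) (\<psi> v)"
    using adj psiB phipsi unfolding B_def by metis
  have om': "\<forall>u\<in>B'. \<forall>v\<in>B'. G' u v \<longrightarrow>
              \<omega>' (min u v) (max u v) = \<omega> (min (\<psi> u) (\<psi> v)) (max (\<psi> u) (\<psi> v))"
    using om psiB phipsi adj' unfolding B_def by metis
  have Hp: "\<forall>u\<in>B. \<forall>v\<in>B. H u v \<longrightarrow> H' (\<phi> u) (\<phi> v)"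
    using adj om unfolding H_def H'_def perc_graph_def B_def by metis
  have Hp': "\<forall>u\<in>B'. \<forall>v\<in>B'. H' u v \<longrightarrow> H (\<psi> u) (\<psi> v)"
    using adj' om' unfolding H_def H'_def perc_graph_def by metis
  have Gp: "\<forall>u\<in>B. \<forall>v\<in>B. G u v \<longrightarrow> G' (\<phi> u) (\<phi> v)" using adj B_def by auto
  have Gp': "\<forall>u\<in>B'. \<forall>v\<in>B'. G' u v \<longrightarrow> G (\<psi> u) (\<psi> v)" using adj' by auto
  note f1 = forth[OF HG(1) Hp[unfolded B_def] Gp[unfolded B_def] z x aR]
  have x': "\<phi> x \<in> ball G' a z'" by (rule f1(3))
  have xB: "x \<in> B" using x ball_mono[of a K G z] aR unfolding B_def by auto
  note f2 = forth[OF HG(2) Hp'[unfolded B'_def] Gp'[unfolded B'_def] z' x' aR]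
  have px: "\<psi> (\<phi> x) = x" using psiphi[OF xB] .
  define S where "S = ball H R x"
  define S' where "S' = ball H' R (\<phi> x)"
  have SB: "S \<subseteq> B" using f1(1) unfolding S_def B_def H_def .
  have SB': "S' \<subseteq> B'" using f2(1) unfolding S'_def B'_def H'_def .
  have "\<phi> ` S \<subseteq> S'" using f1(2) unfolding S_def S'_def H_def H'_def .
  moreover have "\<psi> ` S' \<subseteq> S" using f2(2) px unfolding S_def S'_def H_def H'_def by simp
  ultimately have img: "\<phi> ` S = S'" using SB' phipsi by (force simp: image_subset_iff)
  have inj: "inj_on \<phi> S" using SB psiphi by (metis inj_on_inverseI subsetD)
  have "bij_betw \<phi> S S'" using img inj by (simp add: bij_betw_def)
  moreover have "\<forall>u\<in>S. \<forall>v\<in>S. H u v \<longleftrightarrow> H' (\<phi> u) (\<phi> v)"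
    using Hp Hp' SB psiphi phiB by (metis subsetD)
  ultimately show ?thesis unfolding ball_iso_def S_def S'_def H_def H'_def by auto
qed

lemma transfer_ball:
  assumes bij: "bij_betw \<phi> (ball G K z) (ball G' K z')" and z: "\<phi> z = z'"
    and adj: "\<forall>u\<in>ball G K z. \<forall>v\<in>ball G K z. G u v \<longleftrightarrow> G' (\<phi> u) (\<phi> v)"
    and r: "r \<le> K"
  shows "\<phi> ` ball G r z = ball G' r z'"
proof -
  define B where "B = ball G K z"
  define B' where "B' = ball G' K z'"
  define \<psi> where "\<psi> = inv_into B \<phi>"
  have zB: "z \<in> B" unfolding B_def by simp
  have psiphi: "\<And>u. u \<in> B \<Longrightarrow> \<psi> (\<phi> u) = u" unfolding \<psi>_def
    using bij B_def bij_betw_inv_into_left by fastforce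
  have phipsi: "\<And>u'. u' \<in> B' \<Longrightarrow> \<phi> (\<psi> u') = u'" unfolding \<psi>_def
    using bij B_def B'_def bij_betw_inv_into_right by fastforce
  have psiB: "\<And>u'. u' \<in> B' \<Longrightarrow> \<psi> u' \<in> B" using bij_betw_inv_into[OF bij] bij_betwE B_def B'_def \<psi>_def by blast
  have z': "\<psi> z' = z" using psiphi[OF zB] z by simp
  have adj': "\<forall>u\<in>B'. \<forall>v\<in>B'. G' u v \<longleftrightarrow> G (\<psi> u) (\<psi> v)"
    using adj psiB phipsi unfolding B_def by metis
  have Gp: "\<forall>u\<in>B. \<forall>v\<in>B. G u v \<longrightarrow> G' (\<phi> u) (\<phi> v)" using adj B_def by auto
  have Gp': "\<forall>u\<in>B'. \<forall>v\<in>B'. G' u v \<longrightarrow> G (\<psi> u) (\<psi> v)" using adj' by auto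
  have 1: "\<phi> ` ball G r z \<subseteq> ball G' r z'"
    using forth(3)[of G G K z G' \<phi> G' z' _ r 0] Gp z r unfolding B_def by auto
  have 2: "\<psi> ` ball G' r z' \<subseteq> ball G r z"
    using forth(3)[of G' G' K z' G \<psi> G z _ r 0] Gp' z' r unfolding B'_def by auto
  have "ball G' r z' \<subseteq> B'" using ball_mono[OF r] B'_def by auto
  then show ?thesis using 1 2 phipsi by (force simp: image_subset_iff)
qed



definition Wt :: "real \<Rightarrow> (nat\<times>nat) set \<Rightarrow> (nat\<times>nat \<Rightarrow> bool) \<Rightarrow> real" where
  "Wt p F b = (\<Prod>e\<in>F. if b e then p else 1 - p)"

definition cyl :: "(nat\<times>nat) set \<Rightarrow> (nat\<times>nat \<Rightarrow> bool) \<Rightarrow> graph set" where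
  "cyl F b = {\<omega>. \<forall>e\<in>F. \<omega> (fst e) (snd e) = b e}"

definition ext :: "(nat\<times>nat) set \<Rightarrow> (nat\<times>nat \<Rightarrow> bool) \<Rightarrow> graph" where
  "ext F b = (\<lambda>u v. (u,v) \<in> F \<and> b (u,v))"

lemma space_perc[simp]: "space (perc_measure p) = UNIV"
  by (auto simp: perc_measure_def space_PiM PiE_def extensional_def)

lemma prob_perc: "prob_space (perc_measure p)"
  unfolding perc_measure_def by (intro prob_space_PiM prob_space_measure_pmf)

lemma Wt_nonneg: "0 \<le> p \<Longrightarrow> p \<le> 1 \<Longrightarrow> 0 \<le> Wt p F b"
  unfolding Wt_def by (intro prod_nonneg) auto

lemma cyl_measure:
  assumes F: "finite F" and p: "0 \<le> p" "p \<le> 1"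
  shows "cyl F b \<in> sets (perc_measure p)" "emeasure (perc_measure p) (cyl F b) = ennreal (Wt p F b)"
proof -
  define B where "B = measure_pmf (bernoulli_pmf p)"
  define Mi where "Mi = (PiM (UNIV::nat set) (\<lambda>v. B))"
  define J where "J = fst ` F"
  define Fu where "Fu u = {v. (u,v) \<in> F}" for u
  define C where "C u = prod_emb UNIV (\<lambda>_. B) (Fu u) (PiE (Fu u) (\<lambda>v. {b (u,v)}))" for u
  have P: "perc_measure p = PiM UNIV (\<lambda>u. Mi)" unfolding perc_measure_def Mi_def B_def ..
  have finJ: "finite J" using F unfolding J_def by auto
  have finFu: "finite (Fu u)" for u
  proof -
    have "Fu u \<subseteq> snd ` F" unfolding Fu_def by force
    then show ?thesis using F finite_subset by auto
  qed
  have spB: "space B = UNIV" unfolding B_def by simp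
  have spMi: "space Mi = UNIV" unfolding Mi_def by (auto simp: space_PiM PiE_def extensional_def spB)
  have Cs: "C u \<in> sets Mi" for u
    unfolding C_def Mi_def by (intro measurable_prod_emb sets_PiM_I_finite finFu) (auto simp: B_def)
  have eq: "cyl F b = prod_emb UNIV (\<lambda>_. Mi) J (PiE J C)"
  proof -
    have "\<omega> \<in> cyl F b \<longleftrightarrow> \<omega> \<in> prod_emb UNIV (\<lambda>_. Mi) J (PiE J C)" for \<omega>
    proof -
      have sp: "\<omega> \<in> space (PiM UNIV (\<lambda>_. Mi))" "\<And>u. \<omega> u \<in> space (PiM UNIV (\<lambda>_. B))"
        by (auto simp: space_PiM spMi spB PiE_def extensional_def)
      have "\<omega> \<in> prod_emb UNIV (\<lambda>_. Mi) J (PiE J C) \<longleftrightarrow> (\<forall>u\<in>J. \<omega> u \<in> C u)"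
        using sp by (simp add: prod_emb_def restrict_PiE_iff spMi PiE_def extensional_def Pi_def Ball_def)
      also have "\<dots> \<longleftrightarrow> (\<forall>u\<in>J. \<forall>v\<in>Fu u. \<omega> u v = b (u,v))"
        using sp unfolding C_def by (simp add: prod_emb_def restrict_PiE_iff spB PiE_def extensional_def Pi_def Ball_def)
      also have "\<dots> \<longleftrightarrow> \<omega> \<in> cyl F b"
        unfolding cyl_def J_def Fu_def by force
      finally show ?thesis by simp
    qed
    then show ?thesis by blast
  qed
  show S: "cyl F b \<in> sets (perc_measure p)"
    unfolding eq P by (intro measurable_prod_emb sets_PiM_I_finite finJ Cs) auto
  have pB: "prob_space B" unfolding B_def by (rule prob_space_measure_pmf)
  have pMi: "prob_space Mi" unfolding Mi_def using pB by (intro prob_space_PiM) auto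
  have eC: "emeasure Mi (C u) = (\<Prod>v\<in>Fu u. ennreal (if b (u,v) then p else 1 - p))" for u
  proof -
    have "emeasure Mi (C u) = (\<Prod>v\<in>Fu u. emeasure B {b (u,v)})"
      unfolding Mi_def C_def using pB finFu by (intro emeasure_PiM_emb) (auto simp: B_def)
    also have "\<dots> = (\<Prod>v\<in>Fu u. ennreal (if b (u,v) then p else 1 - p))"
      unfolding B_def using p by (intro prod.cong refl) (auto simp: emeasure_pmf_single)
    finally show ?thesis .
  qed
  have "emeasure (perc_measure p) (cyl F b) = (\<Prod>u\<in>J. emeasure Mi (C u))"
    unfolding eq P using pMi finJ Cs by (intro emeasure_PiM_emb) auto
  also have "\<dots> = (\<Prod>u\<in>J. \<Prod>v\<in>Fu u. ennreal (if b (u,v) then p else 1 - p))"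
    using eC by simp
  also have "\<dots> = (\<Prod>e\<in>Sigma J Fu. ennreal (if b e then p else 1 - p))"
    using finJ finFu by (subst prod.Sigma) auto
  also have "Sigma J Fu = F" unfolding J_def Fu_def by force
  also have "(\<Prod>e\<in>F. ennreal (if b e then p else 1 - p)) = ennreal (Wt p F b)"
    unfolding Wt_def using p by (subst prod_ennreal) auto
  finally show "emeasure (perc_measure p) (cyl F b) = ennreal (Wt p F b)" .
qed

lemma dep_measure:
  assumes F: "finite F" and p: "0 \<le> p" "p \<le> 1"
    and dep: "\<And>\<omega> \<omega>'. (\<forall>e\<in>F. \<omega> (fst e) (snd e) = \<omega>' (fst e) (snd e)) \<Longrightarrow> Q \<omega> = Q \<omega>'"
  shows "{\<omega>. Q \<omega>} \<in> sets (perc_measure p)"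
    "measure (perc_measure p) {\<omega>. Q \<omega>} = (\<Sum>b\<in>{b\<in>PiE F (\<lambda>_. UNIV). Q (ext F b)}. Wt p F b)"
proof -
  define Bs where "Bs = {b\<in>PiE F (\<lambda>_. UNIV::bool set). Q (ext F b)}"
  have finBs: "finite Bs"
  proof (rule finite_subset)
    show "Bs \<subseteq> PiE F (\<lambda>_. UNIV::bool set)" unfolding Bs_def by blast
    show "finite (PiE F (\<lambda>_. UNIV::bool set))" using F by (intro finite_PiE) simp_all
  qed
  have eqU: "{\<omega>. Q \<omega>} = (\<Union>b\<in>Bs. cyl F b)"
  proof (intro equalityI subsetI)
    fix \<omega> assume "\<omega> \<in> {\<omega>. Q \<omega>}"
    then have Q: "Q \<omega>" by simp
    define b where "b = restrict (\<lambda>e. \<omega> (fst e) (snd e)) F"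
    have "Q (ext F b)" using dep[of "ext F b" \<omega>] Q unfolding ext_def b_def by auto
    then have "b \<in> Bs" unfolding Bs_def b_def by auto
    moreover have "\<omega> \<in> cyl F b" unfolding cyl_def b_def by auto
    ultimately show "\<omega> \<in> (\<Union>b\<in>Bs. cyl F b)" by auto
  next
    fix \<omega> assume "\<omega> \<in> (\<Union>b\<in>Bs. cyl F b)"
    then obtain b where b: "b \<in> Bs" "\<omega> \<in> cyl F b" by auto
    then have "Q (ext F b)" unfolding Bs_def by auto
    moreover have "\<forall>e\<in>F. ext F b (fst e) (snd e) = \<omega> (fst e) (snd e)"
      using b(2) unfolding cyl_def ext_def by simp
    then have "Q (ext F b) = Q \<omega>" by (rule dep)
    ultimately show "\<omega> \<in> {\<omega>. Q \<omega>}" by simp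
  qed
  have disj: "disjoint_family_on (cyl F) Bs"
  unfolding disjoint_family_on_def
  proof (intro ballI impI)
    fix b b' assume bb: "b \<in> Bs" "b' \<in> Bs" "b \<noteq> b'"
    have "b \<in> PiE F (\<lambda>_. UNIV)" "b' \<in> PiE F (\<lambda>_. UNIV)" using bb unfolding Bs_def by auto
    then obtain e where "e \<in> F" "b e \<noteq> b' e" using PiE_ext[of b F _ b'] bb(3) by blast
    then show "cyl F b \<inter> cyl F b' = {}" unfolding cyl_def by auto
  qed
  show "{\<omega>. Q \<omega>} \<in> sets (perc_measure p)"
    using finBs cyl_measure(1)[OF F p] by (subst eqU) (intro sets.finite_UN, auto)
  have "measure (perc_measure p) (\<Union>b\<in>Bs. cyl F b) = (\<Sum>b\<in>Bs. measure (perc_measure p) (cyl F b))"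
    using finBs disj cyl_measure[OF F p] by (intro measure_finite_Union) auto
  also have "\<dots> = (\<Sum>b\<in>Bs. Wt p F b)"
    using cyl_measure[OF F p] Wt_nonneg[OF p] by (intro sum.cong refl) (simp add: measure_def)
  finally have X: "measure (perc_measure p) (\<Union>b\<in>Bs. cyl F b) = (\<Sum>b\<in>Bs. Wt p F b)" .
  show "measure (perc_measure p) {\<omega>. Q \<omega>} = (\<Sum>b\<in>{b\<in>PiE F (\<lambda>_. UNIV). Q (ext F b)}. Wt p F b)"
    using X eqU unfolding Bs_def by simp
qed



definition edges :: "graph \<Rightarrow> nat \<Rightarrow> nat \<Rightarrow> (nat\<times>nat) set" where
  "edges G K z = {(min u v, max u v) | u v. u \<in> ball G K z \<and> v \<in> ball G K z \<and> G u v}"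

definition hP :: "real \<Rightarrow> (rgraph \<Rightarrow> bool) \<Rightarrow> nat \<Rightarrow> rgraph \<Rightarrow> real" where
  "hP p E r X = measure (perc_measure p) {\<omega>. \<exists>u\<in>ball (fst X) r (snd X). E (perc_graph (fst X) \<omega>, u)}"

definition loc :: "nat \<Rightarrow> (rgraph \<Rightarrow> bool) \<Rightarrow> bool" where
  "loc R E \<longleftrightarrow> (\<forall>X Y. lf_graph (fst X) \<longrightarrow> lf_graph (fst Y) \<longrightarrow> ball_iso R X Y \<longrightarrow> (E X \<longleftrightarrow> E Y))"

lemma finite_edges: "lf_graph G \<Longrightarrow> finite (edges G K z)"
proof -
  assume "lf_graph G"
  then have "finite (ball G K z \<times> ball G K z)" using finite_ball by auto
  moreover have "edges G K z \<subseteq> (\<lambda>(u,v). (min u v, max u v)) ` (ball G K z \<times> ball G K z)"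
    unfolding edges_def by auto
  ultimately show ?thesis using finite_subset by blast
qed

lemma ball0: "ball G 0 z = {z}" unfolding ball_def by auto

lemma mm_eq: "((min a b, max a b) = (min c d, max c d)) \<longleftrightarrow> {a,b} = {c::nat,d}"
  by (cases "a \<le> b"; cases "c \<le> d") (auto simp: doubleton_eq_iff min_def max_def)

lemma mm_phi: "(min (f (min u v)) (f (max u v)), max (f (min u v)) (f (max u v))) =
   (min (f u) (f v), max (f u) (f (v::nat)) :: nat)"
  by (cases "u \<le> v") (auto simp: min_def max_def)

lemma dep_event:
  assumes lfG: "lf_graph G" and E: "loc R E"
    and agree: "\<forall>e\<in>edges G (r+R) z. \<omega> (fst e) (snd e) = \<omega>' (fst e) (snd e)"
  shows "(\<exists>u\<in>ball G r z. E (perc_graph G \<omega>, u)) = (\<exists>u\<in>ball G r z. E (perc_graph G \<omega>', u))"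
proof -
  have "E (perc_graph G \<omega>, u) = E (perc_graph G \<omega>', u)" if u: "u \<in> ball G r z" for u
  proof -
    have om: "\<forall>u\<in>ball G (r+R) z. \<forall>v\<in>ball G (r+R) z. G u v \<longrightarrow>
              \<omega> (min u v) (max u v) = \<omega>' (min (id u) (id v)) (max (id u) (id v))"
      using agree unfolding edges_def by fastforce
    have "ball_iso R (perc_graph G \<omega>, u) (perc_graph G \<omega>', id u)"
      by (rule transfer[OF lfG lfG _ _ _ om u]) (auto simp: bij_betw_def inj_on_def)
    then show ?thesis using E lf_perc[OF lfG] unfolding loc_def by auto
  qed
  then show ?thesis by auto
qed

lemma sum_PiE_reindex:
  assumes inj: "inj_on \<sigma> F" and F': "F' = \<sigma> ` F" and fin: "finite F"
    and PP: "\<And>b. b \<in> PiE F' (\<lambda>_. UNIV) \<Longrightarrow> P' b \<longleftrightarrow> P (restrict (b \<circ> \<sigma>) F)"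
  shows "(\<Sum>b\<in>{b\<in>PiE F' (\<lambda>_. UNIV). P' b}. Wt p F' b) = (\<Sum>b\<in>{b\<in>PiE F (\<lambda>_. UNIV). P b}. Wt p F b)"
proof -
  define T' where "T' = {b\<in>PiE F' (\<lambda>_. UNIV::bool set). P' b}"
  define T where "T = {b\<in>PiE F (\<lambda>_. UNIV::bool set). P b}"
  define h where "h b = restrict (b \<circ> \<sigma>) F" for b :: "nat\<times>nat \<Rightarrow> bool"
  define g where "g b = restrict (\<lambda>e'. b (inv_into F \<sigma> e')) F'" for b :: "nat\<times>nat \<Rightarrow> bool"
  have hg: "h (g b) = b" if "b \<in> PiE F (\<lambda>_. UNIV)" for b
  proof
    fix e show "h (g b) e = b e"
    proof (cases "e \<in> F")
      case True then show ?thesis using inj unfolding h_def g_def F' by auto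
    next
      case False then show ?thesis using PiE_arb[OF that False] unfolding h_def by auto
    qed
  qed
  have gh: "g (h b) = b" if "b \<in> PiE F' (\<lambda>_. UNIV)" for b
  proof
    fix e show "g (h b) e = b e"
    proof (cases "e \<in> F'")
      case True
      then have 1: "inv_into F \<sigma> e \<in> F" "\<sigma> (inv_into F \<sigma> e) = e" unfolding F'
        by (auto intro: inv_into_into f_inv_into_f)
      show ?thesis using True 1 unfolding h_def g_def by simp
    next
      case False then show ?thesis using PiE_arb[OF that False] unfolding g_def by auto
    qed
  qed
  have hT: "h b \<in> PiE F (\<lambda>_. UNIV)" for b unfolding h_def by auto
  have gT: "g b \<in> PiE F' (\<lambda>_. UNIV)" for b unfolding g_def by auto
  have bij: "bij_betw h T' T"
  proof (rule bij_betw_byWitness[where f'=g])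
    show "\<forall>a\<in>T'. g (h a) = a" using gh unfolding T'_def by auto
    show "\<forall>a'\<in>T. h (g a') = a'" using hg unfolding T_def by auto
    show "h ` T' \<subseteq> T"
    proof (rule image_subsetI)
      fix b assume "b \<in> T'"
      then have "b \<in> PiE F' (\<lambda>_. UNIV)" "P' b" unfolding T'_def by auto
      then have "P (h b)" using PP unfolding h_def by blast
      then show "h b \<in> T" using hT unfolding T_def by blast
    qed
    show "g ` T \<subseteq> T'"
    proof
      fix b' assume "b' \<in> g ` T"
      then obtain b where b: "b \<in> T" "b' = g b" by auto
      then have "P (h (g b))" using hg unfolding T_def by auto
      then have "P' (g b)" using PP[OF gT[of b]] unfolding h_def by blast
      then show "b' \<in> T'" using gT b(2) unfolding T'_def by blast
    qed
  qed
  have W: "Wt p F (h b) = Wt p F' b" for b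
  proof -
    have "Wt p F' b = (\<Prod>e\<in>F. if b (\<sigma> e) then p else 1 - p)"
      unfolding Wt_def F' using inj by (subst prod.reindex) auto
    then show ?thesis unfolding Wt_def h_def by (auto intro!: prod.cong)
  qed
  have "(\<Sum>b\<in>T'. Wt p F' b) = (\<Sum>b\<in>T'. Wt p F (h b))" using W by simp
  also have "\<dots> = (\<Sum>b\<in>T. Wt p F b)" by (rule sum.reindex_bij_betw[OF bij])
  finally show ?thesis unfolding T_def T'_def .
qed

lemma hP_dep:
  assumes lfG: "lf_graph G" and E: "loc R E" and p: "0 \<le> p" "p \<le> 1"
  shows "hP p E r (G,z) = (\<Sum>b\<in>{b\<in>PiE (edges G (r+R) z) (\<lambda>_. UNIV).
            \<exists>u\<in>ball G r z. E (perc_graph G (ext (edges G (r+R) z) b), u)}. Wt p (edges G (r+R) z) b)"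
  unfolding hP_def fst_conv snd_conv
  by (rule dep_measure(2)[OF finite_edges[OF lfG] p]) (rule dep_event[OF lfG E])

lemma hP_inv:
  assumes lfG: "lf_graph G" and lfG': "lf_graph G'" and E: "loc R E" and p: "0 \<le> p" "p \<le> 1"
    and iso: "ball_iso (r+R) (G,z) (G',z')"
  shows "hP p E r (G,z) = hP p E r (G',z')"
proof -
  define K where "K = r + R"
  from iso obtain \<phi> where bij: "bij_betw \<phi> (ball G K z) (ball G' K z')" and z: "\<phi> z = z'"
    and adj: "\<forall>u\<in>ball G K z. \<forall>v\<in>ball G K z. G u v \<longleftrightarrow> G' (\<phi> u) (\<phi> v)"
    unfolding ball_iso_def K_def by auto
  define F where "F = edges G K z"
  define F' where "F' = edges G' K z'"
  define \<sigma> where "\<sigma> e = (min (\<phi> (fst e)) (\<phi> (snd e)), max (\<phi> (fst e)) (\<phi> (snd e)))" for e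
  have injB: "inj_on \<phi> (ball G K z)" using bij bij_betw_imp_inj_on by blast
  have imB: "\<phi> ` ball G K z = ball G' K z'" using bij bij_betw_imp_surj_on by blast
  have sig: "\<sigma> (min u v, max u v) = (min (\<phi> u) (\<phi> v), max (\<phi> u) (\<phi> v))" for u v
    unfolding \<sigma>_def using mm_phi[of \<phi> u v] by simp
  have inj: "inj_on \<sigma> F"
  proof (rule inj_onI)
    fix e1 e2 assume e: "e1 \<in> F" "e2 \<in> F" "\<sigma> e1 = \<sigma> e2"
    from e(1) obtain u1 v1 where 1: "e1 = (min u1 v1, max u1 v1)" "u1 \<in> ball G K z" "v1 \<in> ball G K z"
      unfolding F_def edges_def by auto
    from e(2) obtain u2 v2 where 2: "e2 = (min u2 v2, max u2 v2)" "u2 \<in> ball G K z" "v2 \<in> ball G K z"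
      unfolding F_def edges_def by auto
    have "{\<phi> u1, \<phi> v1} = {\<phi> u2, \<phi> v2}" using e(3) unfolding 1 2 sig mm_eq .
    then have "{u1, v1} = {u2, v2}" using injB 1 2 unfolding doubleton_eq_iff inj_on_def by metis
    then show "e1 = e2" unfolding 1 2 mm_eq .
  qed
  have F': "F' = \<sigma> ` F"
  proof (intro equalityI subsetI)
    fix e' assume "e' \<in> F'"
    then obtain u' v' where e': "e' = (min u' v', max u' v')" "u' \<in> ball G' K z'" "v' \<in> ball G' K z'" "G' u' v'"
      unfolding F'_def edges_def by auto
    then obtain u v where uv: "u \<in> ball G K z" "v \<in> ball G K z" "u' = \<phi> u" "v' = \<phi> v" using imB by blast
    then have "G u v" using adj e' by auto
    then have "(min u v, max u v) \<in> F" unfolding F_def edges_def using uv by auto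
    moreover have "e' = \<sigma> (min u v, max u v)" using sig e' uv by simp
    ultimately show "e' \<in> \<sigma> ` F" by auto
  next
    fix e' assume "e' \<in> \<sigma> ` F"
    then obtain u v where uv: "u \<in> ball G K z" "v \<in> ball G K z" "G u v" "e' = \<sigma> (min u v, max u v)"
      unfolding F_def edges_def by auto
    then have "G' (\<phi> u) (\<phi> v)" "\<phi> u \<in> ball G' K z'" "\<phi> v \<in> ball G' K z'" using adj imB by auto
    then show "e' \<in> F'" unfolding F'_def edges_def uv(4) sig by auto
  qed
  have fin: "finite F" unfolding F_def using finite_edges[OF lfG] .
  have PP: "(\<exists>u'\<in>ball G' r z'. E (perc_graph G' (ext F' b), u')) \<longleftrightarrow>
            (\<exists>u\<in>ball G r z. E (perc_graph G (ext F (restrict (b \<circ> \<sigma>) F)), u))"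
    if b: "b \<in> PiE F' (\<lambda>_. UNIV)" for b
  proof -
    define \<omega> where "\<omega> = ext F (restrict (b \<circ> \<sigma>) F)"
    define \<omega>' where "\<omega>' = ext F' b"
    have om: "\<forall>u\<in>ball G K z. \<forall>v\<in>ball G K z. G u v \<longrightarrow>
              \<omega> (min u v) (max u v) = \<omega>' (min (\<phi> u) (\<phi> v)) (max (\<phi> u) (\<phi> v))"
    proof (intro ballI impI)
      fix u v assume uv: "u \<in> ball G K z" "v \<in> ball G K z" "G u v"
      then have inF: "(min u v, max u v) \<in> F" unfolding F_def edges_def by auto
      then have "\<sigma> (min u v, max u v) \<in> F'" using F' by auto
      then show "\<omega> (min u v) (max u v) = \<omega>' (min (\<phi> u) (\<phi> v)) (max (\<phi> u) (\<phi> v))"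
        using inF unfolding \<omega>_def \<omega>'_def ext_def by (simp add: sig)
    qed
    have iff: "E (perc_graph G \<omega>, u) \<longleftrightarrow> E (perc_graph G' \<omega>', \<phi> u)" if u: "u \<in> ball G r z" for u
    proof -
      have "ball_iso R (perc_graph G \<omega>, u) (perc_graph G' \<omega>', \<phi> u)"
        by (rule transfer[OF lfG lfG' bij z adj om u]) (simp add: K_def)
      then show ?thesis using E lf_perc[OF lfG] lf_perc[OF lfG'] unfolding loc_def by auto
    qed
    have imr: "\<phi> ` ball G r z = ball G' r z'" by (rule transfer_ball[OF bij z adj]) (simp add: K_def)
    have "(\<exists>u'\<in>ball G' r z'. E (perc_graph G' \<omega>', u')) \<longleftrightarrow> (\<exists>u\<in>ball G r z. E (perc_graph G' \<omega>', \<phi> u))"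
      unfolding imr[symmetric] by blast
    then show ?thesis unfolding \<omega>_def[symmetric] \<omega>'_def[symmetric] using iff by auto
  qed
  have "hP p E r (G',z') = (\<Sum>b\<in>{b\<in>PiE F' (\<lambda>_. UNIV).
            \<exists>u\<in>ball G' r z'. E (perc_graph G' (ext F' b), u)}. Wt p F' b)"
    unfolding F'_def K_def by (rule hP_dep[OF lfG' E p])
  also have "\<dots> = (\<Sum>b\<in>{b\<in>PiE F (\<lambda>_. UNIV).
            \<exists>u\<in>ball G r z. E (perc_graph G (ext F b), u)}. Wt p F b)"
    by (rule sum_PiE_reindex[where P'="\<lambda>b. \<exists>u'\<in>ball G' r z'. E (perc_graph G' (ext F' b), u')"
          and P="\<lambda>b. \<exists>u\<in>ball G r z. E (perc_graph G (ext F b), u)", OF inj F' fin PP])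
  also have "\<dots> = hP p E r (G,z)"
    unfolding F_def K_def by (rule hP_dep[OF lfG E p, symmetric])
  finally show ?thesis by simp
qed



definition GS :: "rgraph measure" where
  "GS = ((\<Pi>\<^sub>M u\<in>UNIV. \<Pi>\<^sub>M v\<in>UNIV. count_space UNIV) \<Otimes>\<^sub>M count_space UNIV)"

lemma rg_space_GS: "rg_space = restrict_space GS {X. lf_graph (fst X)}"
  unfolding rg_space_def GS_def ..

lemma pred_adj: "Measurable.pred GS (\<lambda>Z. fst Z (a::nat) (b::nat))"
proof -
  have 1: "fst \<in> GS \<rightarrow>\<^sub>M (\<Pi>\<^sub>M u\<in>UNIV. \<Pi>\<^sub>M v\<in>UNIV. count_space (UNIV::bool set))"
    unfolding GS_def by (rule measurable_fst)
  have 2: "(\<lambda>g. g a) \<in> (\<Pi>\<^sub>M u\<in>UNIV. \<Pi>\<^sub>M v\<in>UNIV. count_space (UNIV::bool set)) \<rightarrow>\<^sub>M (\<Pi>\<^sub>M v\<in>UNIV. count_space (UNIV::bool set))"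
    by (rule measurable_component_singleton) simp
  have 3: "(\<lambda>f. f b) \<in> (\<Pi>\<^sub>M v\<in>UNIV. count_space (UNIV::bool set)) \<rightarrow>\<^sub>M count_space (UNIV::bool set)"
    by (rule measurable_component_singleton) simp
  show ?thesis unfolding pred_def using measurable_compose[OF measurable_compose[OF 1 2] 3] by simp
qed

lemma pred_root: "Measurable.pred GS (\<lambda>Z. snd Z = (x::nat))"
proof -
  have 1: "snd \<in> GS \<rightarrow>\<^sub>M count_space (UNIV::nat set)"
    unfolding GS_def by (rule measurable_snd)
  have 2: "(\<lambda>y. y = x) \<in> count_space (UNIV::nat set) \<rightarrow>\<^sub>M count_space (UNIV::bool set)" by simp
  show ?thesis unfolding pred_def using measurable_compose[OF 1 2] by simp
qed

lemma pred_const': "Measurable.pred M (\<lambda>_. c)" unfolding pred_def by (cases c) auto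

lemma pred_pow: "Measurable.pred GS (\<lambda>Z. (fst Z ^^ k) (x::nat) (v::nat))"
proof (induction k arbitrary: v)
  case 0
  have "(\<lambda>Z. (fst Z ^^ 0) x v) = (\<lambda>Z. x = v)" by auto
  show ?case unfolding \<open>(\<lambda>Z. (fst Z ^^ 0) x v) = (\<lambda>Z. x = v)\<close> by (rule pred_const')
next
  case (Suc k)
  have "Measurable.pred GS (\<lambda>Z. \<exists>w. (fst Z ^^ k) x w \<and> fst Z w v)"
    by (intro pred_intros_countable(2) pred_intros_logic(3) Suc.IH pred_adj)
  then show ?case by (simp add: relcompp_apply)
qed

lemma pred_ball: "Measurable.pred GS (\<lambda>Z. (v::nat) \<in> ball (fst Z) R (snd Z))"
proof -
  have "(\<lambda>Z. v \<in> ball (fst Z) R (snd Z)) = (\<lambda>Z. \<exists>x. snd Z = x \<and> (\<exists>k\<in>{..R}. (fst Z ^^ k) x v))"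
    unfolding ball_def by auto
  moreover have "Measurable.pred GS (\<lambda>Z. \<exists>x. snd Z = x \<and> (\<exists>k\<in>{..R}. (fst Z ^^ k) x v))"
    by (intro pred_intros_countable(2) pred_intros_logic(3) pred_root pred_intros_finite(4) pred_pow) auto
  ultimately show ?thesis by simp
qed

lemma lf_graph_alt: "lf_graph G \<longleftrightarrow> (\<forall>u v. G u v = G v u) \<and> (\<forall>u. \<not> G u u) \<and> (\<forall>u. \<exists>N. \<forall>v. N \<le> v \<longrightarrow> \<not> G u v)"
proof -
  have "finite {v. G u v} \<longleftrightarrow> (\<exists>N. \<forall>v. N \<le> v \<longrightarrow> \<not> G u v)" for u
  proof
    assume "finite {v. G u v}"
    then obtain m where "\<forall>n\<in>{v. G u v}. n < m" unfolding finite_nat_set_iff_bounded by blast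
    then show "\<exists>N. \<forall>v. N \<le> v \<longrightarrow> \<not> G u v" by (intro exI[of _ m]) auto
  next
    assume "\<exists>N. \<forall>v. N \<le> v \<longrightarrow> \<not> G u v"
    then obtain N where "\<forall>v. N \<le> v \<longrightarrow> \<not> G u v" by blast
    then have "{v. G u v} \<subseteq> {..<N}" by (auto simp: not_le[symmetric])
    then show "finite {v. G u v}" using finite_subset by blast
  qed
  then show ?thesis unfolding lf_graph_def by blast
qed

lemma pred_lf: "Measurable.pred GS (\<lambda>Z. lf_graph (fst Z))"
proof -
  have "Measurable.pred GS (\<lambda>Z. (\<forall>u v. fst Z u v = fst Z v u) \<and> (\<forall>u. \<not> fst Z u u) \<and>
           (\<forall>u. \<exists>N. \<forall>v. N \<le> v \<longrightarrow> \<not> fst Z u v))"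
    by (intro pred_intros_logic(3) pred_intros_countable pred_intros_logic(6) pred_intros_logic(2) pred_intros_logic(4) pred_adj pred_const')
  then show ?thesis unfolding lf_graph_alt .
qed

definition key :: "nat \<Rightarrow> rgraph \<Rightarrow> nat set \<times> graph \<times> nat" where
  "key R Z = (ball (fst Z) R (snd Z), \<lambda>a b. a \<in> ball (fst Z) R (snd Z) \<and> b \<in> ball (fst Z) R (snd Z) \<and> fst Z a b, snd Z)"

lemma pred_key: "Measurable.pred GS (\<lambda>Z. key R Z = k)"
proof -
  obtain S A x where k: "k = (S, A, x)" by (cases k) auto
  have "(\<lambda>Z. key R Z = k) = (\<lambda>Z. (\<forall>v. (v \<in> ball (fst Z) R (snd Z)) = (v \<in> S)) \<and>
      (\<forall>a b. (a \<in> ball (fst Z) R (snd Z) \<and> b \<in> ball (fst Z) R (snd Z) \<and> fst Z a b) = A a b) \<and> snd Z = x)"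
    unfolding key_def k by (auto simp: fun_eq_iff set_eq_iff)
  moreover have "Measurable.pred GS (\<lambda>Z. (\<forall>v. (v \<in> ball (fst Z) R (snd Z)) = (v \<in> S)) \<and>
      (\<forall>a b. (a \<in> ball (fst Z) R (snd Z) \<and> b \<in> ball (fst Z) R (snd Z) \<and> fst Z a b) = A a b) \<and> snd Z = x)"
    by (intro pred_intros_logic(3) pred_intros_countable pred_intros_logic(6) pred_ball pred_const' pred_adj pred_root)
  ultimately show ?thesis by simp
qed

lemma countable_keys: "countable (key R ` {Z. lf_graph (fst Z)})"
proof -
  define K0 where "K0 = (\<lambda>(S,P,x). (S, \<lambda>a b. (a,b) \<in> P, x)) ` ((Collect finite :: nat set set) \<times> (Collect finite :: (nat\<times>nat) set set) \<times> (UNIV::nat set))"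
  have "countable K0" unfolding K0_def
    by (intro countable_image countable_SIGMA countable_Collect_finite) auto
  moreover have "key R ` {Z. lf_graph (fst Z)} \<subseteq> K0"
  proof
    fix k assume "k \<in> key R ` {Z. lf_graph (fst Z)}"
    then obtain Z where Z: "lf_graph (fst Z)" "k = key R Z" by auto
    define S where "S = ball (fst Z) R (snd Z)"
    define P where "P = {(a,b). a \<in> S \<and> b \<in> S \<and> fst Z a b}"
    have fS: "finite S" unfolding S_def using finite_ball[OF Z(1)] .
    have "finite P" using fS by (intro finite_subset[of P "S \<times> S"]) (auto simp: P_def)
    moreover have "k = (\<lambda>(S,P,x). (S, \<lambda>a b. (a,b) \<in> P, x)) (S, P, snd Z)"
      unfolding Z(2) key_def S_def P_def by simp
    ultimately show "k \<in> K0" unfolding K0_def using fS by blast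
  qed
  ultimately show ?thesis using countable_subset by blast
qed

lemma pred_E:
  assumes E: "loc R E"
  shows "Measurable.pred GS (\<lambda>Z. lf_graph (fst Z) \<and> E Z)"
proof -
  define KS where "KS = key R ` {Z. lf_graph (fst Z) \<and> E Z}"
  have "KS \<subseteq> key R ` {Z. lf_graph (fst Z)}" unfolding KS_def by auto
  then have cKS: "countable KS" using countable_keys[of R] by (rule countable_subset)
  have eq: "(lf_graph (fst Z) \<and> E Z) \<longleftrightarrow> (lf_graph (fst Z) \<and> (\<exists>k\<in>KS. key R Z = k))" for Z
  proof
    assume "lf_graph (fst Z) \<and> (\<exists>k\<in>KS. key R Z = k)"
    then have lf: "lf_graph (fst Z)" and "key R Z \<in> KS" by auto
    then obtain Z0 where Z0: "lf_graph (fst Z0)" "E Z0" "key R Z0 = key R Z"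
      unfolding KS_def by (auto simp: image_iff)
    have "ball_iso R Z0 Z" unfolding ball_iso_def
    proof (intro exI[of _ id] conjI)
      have kk: "(ball (fst Z0) R (snd Z0), \<lambda>a b. a \<in> ball (fst Z0) R (snd Z0) \<and> b \<in> ball (fst Z0) R (snd Z0) \<and> fst Z0 a b, snd Z0)
         = (ball (fst Z) R (snd Z), \<lambda>a b. a \<in> ball (fst Z) R (snd Z) \<and> b \<in> ball (fst Z) R (snd Z) \<and> fst Z a b, snd Z)"
        using Z0(3) unfolding key_def .
      note ccc = kk[unfolded prod.inject]
      note b = ccc[THEN conjunct1] and ff = ccc[THEN conjunct2, THEN conjunct1] and r = ccc[THEN conjunct2, THEN conjunct2]
      have a: "(a \<in> ball (fst Z0) R (snd Z0) \<and> b \<in> ball (fst Z0) R (snd Z0) \<and> fst Z0 a b) =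
               (a \<in> ball (fst Z) R (snd Z) \<and> b \<in> ball (fst Z) R (snd Z) \<and> fst Z a b)" for a b
        using fun_cong[OF fun_cong[OF ff, of a], of b] by (simp only:)
      show "bij_betw id (ball (fst Z0) R (snd Z0)) (ball (fst Z) R (snd Z))" unfolding b by simp
      show "id (snd Z0) = snd Z" using r by simp
      show "\<forall>u\<in>ball (fst Z0) R (snd Z0). \<forall>v\<in>ball (fst Z0) R (snd Z0). fst Z0 u v = fst Z (id u) (id v)"
        using a b by auto
    qed
    then show "lf_graph (fst Z) \<and> E Z" using E Z0 lf unfolding loc_def by blast
  qed (auto simp: KS_def)
  have "{Z \<in> space GS. lf_graph (fst Z) \<and> (\<exists>k\<in>KS. key R Z = k)} =
        {Z \<in> space GS. lf_graph (fst Z)} \<inter> (\<Union>k\<in>KS. {Z \<in> space GS. key R Z = k})" by auto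
  also have "\<dots> \<in> sets GS"
    using pred_lf pred_key cKS unfolding pred_def by (intro sets.Int sets.countable_UN') auto
  finally show ?thesis unfolding pred_def eq .
qed



lemma pred_comp: "Measurable.pred N P \<Longrightarrow> f \<in> M \<rightarrow>\<^sub>M N \<Longrightarrow> Measurable.pred M (\<lambda>x. P (f x))"
  by (rule measurable_compose)

lemma meas_rg_GS: "(\<lambda>x. x) \<in> rg_space \<rightarrow>\<^sub>M GS"
  unfolding rg_space_GS by (intro measurable_restrict_space1 measurable_ident_sets) simp

lemma meas_fst_GS: "(\<lambda>z. fst z) \<in> (rg_space \<Otimes>\<^sub>M N) \<rightarrow>\<^sub>M GS"
  by (rule measurable_compose[OF measurable_fst meas_rg_GS])

lemma pred_snd_coord: "Measurable.pred (rg_space \<Otimes>\<^sub>M perc_measure p) (\<lambda>z. snd z (a::nat) (b::nat))"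
proof -
  have 1: "snd \<in> (rg_space \<Otimes>\<^sub>M perc_measure p) \<rightarrow>\<^sub>M perc_measure p" by (rule measurable_snd)
  have 2: "(\<lambda>g. g a) \<in> perc_measure p \<rightarrow>\<^sub>M (\<Pi>\<^sub>M v\<in>UNIV. measure_pmf (bernoulli_pmf p))"
    unfolding perc_measure_def by (rule measurable_component_singleton) simp
  have 3: "(\<lambda>f. f b) \<in> (\<Pi>\<^sub>M v\<in>UNIV. measure_pmf (bernoulli_pmf p)) \<rightarrow>\<^sub>M measure_pmf (bernoulli_pmf p)"
    by (rule measurable_component_singleton) simp
  have 4: "(\<lambda>x. x) \<in> measure_pmf (bernoulli_pmf p) \<rightarrow>\<^sub>M count_space (UNIV::bool set)" by simp
  show ?thesis using measurable_compose[OF measurable_compose[OF measurable_compose[OF 1 2] 3] 4] by simp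
qed

lemma meas_perc: "(\<lambda>z. perc_graph (fst (fst z)) (snd z)) \<in>
   (rg_space \<Otimes>\<^sub>M perc_measure p) \<rightarrow>\<^sub>M (\<Pi>\<^sub>M u\<in>UNIV. \<Pi>\<^sub>M v\<in>UNIV. count_space UNIV)"
proof -
  have c: "Measurable.pred (rg_space \<Otimes>\<^sub>M perc_measure p) (\<lambda>z. fst (fst z) u v \<and> snd z (min u v) (max u v))" for u v
    by (intro pred_intros_logic(3) pred_snd_coord pred_comp[OF pred_adj meas_fst_GS])
  have inner: "(\<lambda>z v. fst (fst z) u v \<and> snd z (min u v) (max u v)) \<in>
      (rg_space \<Otimes>\<^sub>M perc_measure p) \<rightarrow>\<^sub>M (\<Pi>\<^sub>M v\<in>UNIV. count_space UNIV)" for u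
    by (rule measurable_PiM_single'[OF c]) (auto simp: space_PiM)
  have "(\<lambda>z u v. fst (fst z) u v \<and> snd z (min u v) (max u v)) \<in>
      (rg_space \<Otimes>\<^sub>M perc_measure p) \<rightarrow>\<^sub>M (\<Pi>\<^sub>M u\<in>UNIV. \<Pi>\<^sub>M v\<in>UNIV. count_space UNIV)"
    by (rule measurable_PiM_single'[OF inner]) (auto simp: space_PiM PiE_def extensional_def)
  then show ?thesis unfolding perc_graph_def .
qed

lemma meas_Psi: "(\<lambda>z. (perc_graph (fst (fst z)) (snd z), u)) \<in> (rg_space \<Otimes>\<^sub>M perc_measure p) \<rightarrow>\<^sub>M GS"
  unfolding GS_def by (intro measurable_Pair meas_perc) simp

lemma meas_Psi0: "(\<lambda>z. (perc_graph (fst (fst z)) (snd z), snd (fst z))) \<in> (rg_space \<Otimes>\<^sub>M perc_measure p) \<rightarrow>\<^sub>M GS"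
proof -
  have "(\<lambda>z. snd (fst z)) \<in> (rg_space \<Otimes>\<^sub>M perc_measure p) \<rightarrow>\<^sub>M count_space UNIV"
  proof -
    have "snd \<in> GS \<rightarrow>\<^sub>M count_space UNIV" unfolding GS_def by (rule measurable_snd)
    then show ?thesis by (rule measurable_compose[OF meas_fst_GS])
  qed
  then show ?thesis unfolding GS_def by (intro measurable_Pair meas_perc)
qed

lemma space_rg: "space rg_space = {X. lf_graph (fst X)}"
  unfolding rg_space_def by (simp add: space_restrict_space space_pair_measure space_PiM PiE_def extensional_def)

lemma sets_S1:
  assumes E: "loc R E"
  shows "{z \<in> space (rg_space \<Otimes>\<^sub>M perc_measure p).
          \<exists>u\<in>ball (fst (fst z)) r (snd (fst z)). E (perc_graph (fst (fst z)) (snd z), u)}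
       \<in> sets (rg_space \<Otimes>\<^sub>M perc_measure p)"
proof -
  let ?M = "rg_space \<Otimes>\<^sub>M perc_measure p"
  have "Measurable.pred ?M (\<lambda>z. \<exists>u. u \<in> ball (fst (fst z)) r (snd (fst z)) \<and>
       (lf_graph (fst (perc_graph (fst (fst z)) (snd z), u)) \<and> E (perc_graph (fst (fst z)) (snd z), u)))"
    by (intro pred_intros_countable(2) pred_intros_logic(3) pred_comp[OF pred_ball meas_fst_GS]
          pred_comp[OF pred_E[OF E] meas_Psi])
  then have s: "{z\<in>space ?M. \<exists>u. u \<in> ball (fst (fst z)) r (snd (fst z)) \<and>
       (lf_graph (fst (perc_graph (fst (fst z)) (snd z), u)) \<and> E (perc_graph (fst (fst z)) (snd z), u))} \<in> sets ?M"
    unfolding pred_def .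
  have "z \<in> space ?M \<Longrightarrow> lf_graph (fst (fst z))" for z by (auto simp: space_pair_measure space_rg)
  then have "{z \<in> space ?M. \<exists>u\<in>ball (fst (fst z)) r (snd (fst z)). E (perc_graph (fst (fst z)) (snd z), u)} =
    {z\<in>space ?M. \<exists>u. u \<in> ball (fst (fst z)) r (snd (fst z)) \<and>
       (lf_graph (fst (perc_graph (fst (fst z)) (snd z), u)) \<and> E (perc_graph (fst (fst z)) (snd z), u))}"
    using lf_perc by auto
  then show ?thesis using s by simp
qed

lemma sets_S0:
  assumes E: "loc R E"
  shows "{z \<in> space (rg_space \<Otimes>\<^sub>M perc_measure p).
          E (perc_graph (fst (fst z)) (snd z), snd (fst z))}
       \<in> sets (rg_space \<Otimes>\<^sub>M perc_measure p)"
proof -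
  let ?M = "rg_space \<Otimes>\<^sub>M perc_measure p"
  have "Measurable.pred ?M (\<lambda>z. (lf_graph (fst (perc_graph (fst (fst z)) (snd z), snd (fst z))) \<and> E (perc_graph (fst (fst z)) (snd z), snd (fst z))))"
    by (rule pred_comp[OF pred_E[OF E] meas_Psi0])
  then have s: "{z\<in>space ?M. lf_graph (fst (perc_graph (fst (fst z)) (snd z), snd (fst z))) \<and> E (perc_graph (fst (fst z)) (snd z), snd (fst z))} \<in> sets ?M"
    unfolding pred_def .
  have "z \<in> space ?M \<Longrightarrow> lf_graph (fst (fst z))" for z by (auto simp: space_pair_measure space_rg)
  then have "{z \<in> space ?M. E (perc_graph (fst (fst z)) (snd z), snd (fst z))} =
    {z\<in>space ?M. lf_graph (fst (perc_graph (fst (fst z)) (snd z), snd (fst z))) \<and> E (perc_graph (fst (fst z)) (snd z), snd (fst z))}"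
    using lf_perc by auto
  then show ?thesis using s by simp
qed

lemma fubini_meas:
  assumes M: "prob_space M" and N: "prob_space N" and spN: "space N = UNIV"
    and S: "{z \<in> space (M \<Otimes>\<^sub>M N). Q (fst z) (snd z)} \<in> sets (M \<Otimes>\<^sub>M N)"
  shows "measure (M \<Otimes>\<^sub>M N) {z \<in> space (M \<Otimes>\<^sub>M N). Q (fst z) (snd z)} = (\<integral>x. measure N {\<omega>. Q x \<omega>} \<partial>M)"
proof -
  interpret N: prob_space N by fact
  let ?S = "{z \<in> space (M \<Otimes>\<^sub>M N). Q (fst z) (snd z)}"
  have sec: "Pair x -` ?S = {\<omega>. Q x \<omega>}" if "x \<in> space M" for x
    using that by (auto simp: space_pair_measure spN)
  have "measure (M \<Otimes>\<^sub>M N) ?S = enn2real (\<integral>\<^sup>+x. emeasure N (Pair x -` ?S) \<partial>M)"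
    unfolding measure_def using N.emeasure_pair_measure_alt[OF S] by simp
  also have "\<dots> = (\<integral>x. measure N {\<omega>. Q x \<omega>} \<partial>M)"
  proof (rule enn2real_nn_integral_eq_integral)
    show "AE x in M. emeasure N (Pair x -` ?S) = ennreal (measure N {\<omega>. Q x \<omega>})"
      using sec by (auto simp: N.emeasure_eq_measure)
    show "AE x in M. 0 \<le> measure N {\<omega>. Q x \<omega>}" by simp
    have "(\<lambda>x. enn2real (emeasure N (Pair x -` ?S))) \<in> M \<rightarrow>\<^sub>M borel"
      using N.measurable_emeasure_Pair[OF S] by measurable
    then show "(\<lambda>x. measure N {\<omega>. Q x \<omega>}) \<in> M \<rightarrow>\<^sub>M borel"
      by (rule measurable_cong[THEN iffD1, rotated]) (auto simp: measure_def space_pair_measure spN)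
  qed
  finally show ?thesis .
qed



lemma hP_nonneg: "0 \<le> hP p E r X" unfolding hP_def by simp

lemma hP_le1: "hP p E r X \<le> 1"
proof -
  interpret prob_space "perc_measure p" by (rule prob_perc)
  show ?thesis unfolding hP_def by (rule prob_le_1)
qed

lemma hP_cont:
  assumes E: "loc R E" and p: "0 \<le> p" "p \<le> 1"
  shows "locally_continuous (hP p E r)" "bounded_on_lf (hP p E r)"
proof -
  show "locally_continuous (hP p E r)" unfolding locally_continuous_def
  proof (intro allI impI exI[of _ "r+R"])
    fix X Y :: rgraph and \<epsilon> :: real
    assume "lf_graph (fst X)" "0 < \<epsilon>" "lf_graph (fst Y)" "ball_iso (r + R) X Y"
    then have "hP p E r (fst X, snd X) = hP p E r (fst Y, snd Y)"
      by (intro hP_inv[OF _ _ E p]) auto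
    then show "\<bar>hP p E r X - hP p E r Y\<bar> < \<epsilon>" using \<open>0 < \<epsilon>\<close> by simp
  qed
  show "bounded_on_lf (hP p E r)" unfolding bounded_on_lf_def
    using hP_nonneg hP_le1 by (intro exI[of _ 1]) (auto simp: abs_le_iff intro: order_trans[of _ 0])
qed

definition gM :: "nat \<Rightarrow> nat \<Rightarrow> rgraph \<Rightarrow> real" where
  "gM K M X = (if M < card (ball (fst X) K (snd X)) then 1 else 0)"

lemma gM_cont: "locally_continuous (gM K M)" "bounded_on_lf (gM K M)"
proof -
  show "locally_continuous (gM K M)" unfolding locally_continuous_def
  proof (intro allI impI exI[of _ "K"])
    fix X Y :: rgraph and \<epsilon> :: real
    assume "0 < \<epsilon>" "ball_iso K X Y"
    then obtain \<phi> where "bij_betw \<phi> (ball (fst X) K (snd X)) (ball (fst Y) K (snd Y))"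
      unfolding ball_iso_def by auto
    then have "card (ball (fst X) K (snd X)) = card (ball (fst Y) K (snd Y))" by (rule bij_betw_same_card)
    then show "\<bar>gM K M X - gM K M Y\<bar> < \<epsilon>" using \<open>0 < \<epsilon>\<close> unfolding gM_def by simp
  qed
  show "bounded_on_lf (gM K M)" unfolding bounded_on_lf_def gM_def by (intro exI[of _ 1]) auto
qed

lemma gM_meas: "gM K M \<in> borel_measurable rg_space"
proof -
  define SS where "SS = {S::nat set. finite S \<and> card S = Suc M}"
  have cSS: "countable SS" unfolding SS_def
    by (rule countable_subset[OF _ countable_Collect_finite]) auto
  have eq: "{X \<in> space rg_space. M < card (ball (fst X) K (snd X))} =
        (\<Union>S\<in>SS. {X \<in> space rg_space. \<forall>v\<in>S. v \<in> ball (fst X) K (snd X)})"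
  proof (intro equalityI subsetI)
    fix X assume X: "X \<in> {X \<in> space rg_space. M < card (ball (fst X) K (snd X))}"
    then have "Suc M \<le> card (ball (fst X) K (snd X))" by auto
    then obtain T where "T \<subseteq> ball (fst X) K (snd X)" "card T = Suc M" "finite T"
      by (rule obtain_subset_with_card_n)
    then show "X \<in> (\<Union>S\<in>SS. {X \<in> space rg_space. \<forall>v\<in>S. v \<in> ball (fst X) K (snd X)})"
      using X unfolding SS_def by auto
  next
    fix X assume "X \<in> (\<Union>S\<in>SS. {X \<in> space rg_space. \<forall>v\<in>S. v \<in> ball (fst X) K (snd X)})"
    then obtain S where S: "S \<in> SS" "X \<in> space rg_space" "S \<subseteq> ball (fst X) K (snd X)" by auto
    have "finite (ball (fst X) K (snd X))" using S(2) finite_ball by (auto simp: space_rg)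
    then have "card S \<le> card (ball (fst X) K (snd X))" using S(3) by (rule card_mono)
    then show "X \<in> {X \<in> space rg_space. M < card (ball (fst X) K (snd X))}" using S unfolding SS_def by auto
  qed
  have "Measurable.pred rg_space (\<lambda>X. \<forall>v\<in>S. v \<in> ball (fst X) K (snd X))" if "S \<in> SS" for S
    using that unfolding SS_def by (intro pred_intros_finite(3) pred_comp[OF pred_ball meas_rg_GS]) auto
  then have "(\<Union>S\<in>SS. {X \<in> space rg_space. \<forall>v\<in>S. v \<in> ball (fst X) K (snd X)}) \<in> sets rg_space"
    using cSS by (intro sets.countable_UN') (auto simp: pred_def)
  then have "Measurable.pred rg_space (\<lambda>X. M < card (ball (fst X) K (snd X)))"
    unfolding pred_def eq .
  then show ?thesis unfolding gM_def by measurable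
qed

lemma tight:
  assumes M: "prob_space \<mu>" and S: "sets \<mu> = sets rg_space"
  shows "(\<lambda>M. integral\<^sup>L \<mu> (gM K M)) \<longlonglongrightarrow> 0"
proof -
  interpret prob_space \<mu> by fact
  have meas: "gM K M \<in> borel_measurable \<mu>" for M
    using gM_meas measurable_cong_sets[OF S refl] by blast
  have "(\<lambda>M. integral\<^sup>L \<mu> (gM K M)) \<longlonglongrightarrow> integral\<^sup>L \<mu> (\<lambda>_. 0::real)"
  proof (rule integral_dominated_convergence[where w="\<lambda>_. 1"])
    show "(\<lambda>_. 0::real) \<in> borel_measurable \<mu>" by simp
    show "gM K M \<in> borel_measurable \<mu>" for M by (rule meas)
    show "integrable \<mu> (\<lambda>_. 1::real)" by simp
    show "AE x in \<mu>. norm (gM K M x) \<le> 1" for M unfolding gM_def by simp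
    have "(\<lambda>M. gM K M x) \<longlonglongrightarrow> 0" if x: "x \<in> space \<mu>" for x
    proof -
      have "lf_graph (fst x)" using x sets_eq_imp_space_eq[OF S] by (auto simp: space_rg)
      then have "eventually (\<lambda>M. gM K M x = 0) sequentially"
        unfolding gM_def eventually_sequentially
        by (intro exI[of _ "card (ball (fst x) K (snd x))"]) auto
      then show ?thesis by (rule tendsto_eventually)
    qed
    then show "AE x in \<mu>. (\<lambda>M. gM K M x) \<longlonglongrightarrow> 0" by auto
  qed
  then show ?thesis by simp
qed



lemma hP0_eq: "hP p E 0 (G,u) = measure (perc_measure p) {\<omega>. E (perc_graph G \<omega>, u)}"
  unfolding hP_def by (simp add: ball0)

lemma event_sets:
  assumes lf: "lf_graph G" and E: "loc R E" and p: "0 \<le> p" "p \<le> 1"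
  shows "{\<omega>. E (perc_graph G \<omega>, u)} \<in> sets (perc_measure p)"
proof -
  have "{\<omega>. \<exists>u'\<in>ball G 0 u. E (perc_graph G \<omega>, u')} \<in> sets (perc_measure p)"
    by (rule dep_measure(1)[OF finite_edges[OF lf] p]) (rule dep_event[OF lf E])
  then show ?thesis by (simp add: ball0)
qed

lemma union_bound:
  assumes lf: "lf_graph G" and E: "loc R E" and p: "0 \<le> p" "p \<le> 1"
  shows "hP p E r (G,v) \<le> (\<Sum>u\<in>ball G r v. hP p E 0 (G,u))"
proof -
  have "{\<omega>. \<exists>u\<in>ball G r v. E (perc_graph G \<omega>, u)} = (\<Union>u\<in>ball G r v. {\<omega>. E (perc_graph G \<omega>, u)})" by auto
  then have "hP p E r (G,v) = measure (perc_measure p) (\<Union>u\<in>ball G r v. {\<omega>. E (perc_graph G \<omega>, u)})"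
    unfolding hP_def by simp
  also have "\<dots> \<le> (\<Sum>u\<in>ball G r v. measure (perc_measure p) {\<omega>. E (perc_graph G \<omega>, u)})"
  proof (rule measure_subadditive_finite)
    show "finite (ball G r v)" by (rule finite_ball[OF lf])
    show "(\<lambda>u. {\<omega>. E (perc_graph G \<omega>, u)}) ` ball G r v \<subseteq> sets (perc_measure p)"
      using event_sets[OF lf E p] by auto
    interpret prob_space "perc_measure p" by (rule prob_perc)
    show "emeasure (perc_measure p) {\<omega>. E (perc_graph G \<omega>, u)} \<noteq> \<infinity>" for u by simp
  qed
  also have "\<dots> = (\<Sum>u\<in>ball G r v. hP p E 0 (G,u))" by (simp add: hP0_eq)
  finally show ?thesis .
qed

lemma count_bound:
  assumes fg: "finite_graph n G"
  shows "card {v\<in>{..<n}. u \<in> ball G r v \<and> \<not> M < card (ball G (2*r) v)} \<le> M"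
proof (cases "{v\<in>{..<n}. u \<in> ball G r v \<and> \<not> M < card (ball G (2*r) v)} = {}")
  case True show ?thesis unfolding True by simp
next
  case False
  have lf: "lf_graph G" using fg unfolding finite_graph_def by simp
  from False obtain v0 where v0: "u \<in> ball G r v0" "\<not> M < card (ball G (2*r) v0)" by auto
  have "{v\<in>{..<n}. u \<in> ball G r v \<and> \<not> M < card (ball G (2*r) v)} \<subseteq> ball G (2*r) v0"
  proof
    fix v assume "v \<in> {v\<in>{..<n}. u \<in> ball G r v \<and> \<not> M < card (ball G (2*r) v)}"
    then have "v \<in> ball G r u" using ball_sym[OF lf] by auto
    then have "v \<in> ball G (r + r) v0" using ball_trans v0(1) by blast
    then show "v \<in> ball G (2*r) v0" by (simp add: mult_2)
  qed
  then have "card {v\<in>{..<n}. u \<in> ball G r v \<and> \<not> M < card (ball G (2*r) v)} \<le> card (ball G (2*r) v0)"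
    using finite_ball[OF lf] by (intro card_mono) auto
  then show ?thesis using v0(2) by simp
qed

lemma finite_ineq:
  assumes fg: "finite_graph n G" and E: "loc R E" and p: "0 \<le> p" "p \<le> 1"
  shows "(\<Sum>v<n. hP p E r (G,v)) \<le> (\<Sum>v<n. gM (2*r) M (G,v)) + real M * (\<Sum>u<n. hP p E 0 (G,u))"
proof -
  have lf: "lf_graph G" using fg unfolding finite_graph_def by simp
  define c where "c v u = (if u \<in> ball G r v \<and> \<not> M < card (ball G (2*r) v) then 1 else 0::real)" for v u
  define h where "h u = hP p E 0 (G,u)" for u
  have h0: "0 \<le> h u" for u unfolding h_def by (rule hP_nonneg)
  have per: "hP p E r (G,v) \<le> gM (2*r) M (G,v) + (\<Sum>u<n. c v u * h u)" if v: "v < n" for v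
  proof (cases "M < card (ball G (2*r) v)")
    case True
    have "0 \<le> (\<Sum>u<n. c v u * h u)" using h0 unfolding c_def by (intro sum_nonneg) auto
    then show ?thesis using True hP_le1[of p E r "(G,v)"] unfolding gM_def by simp
  next
    case False
    have sub: "ball G r v \<subseteq> {..<n}" by (rule ball_finite_graph[OF fg v])
    have "(\<Sum>u<n. c v u * h u) = (\<Sum>u<n. if u \<in> ball G r v then h u else 0)"
      using False unfolding c_def by (intro sum.cong) auto
    also have "\<dots> = (\<Sum>u\<in>{..<n} \<inter> ball G r v. h u)" by (simp add: sum.inter_restrict)
    also have "{..<n} \<inter> ball G r v = ball G r v" using sub by auto
    finally have "(\<Sum>u<n. c v u * h u) = (\<Sum>u\<in>ball G r v. h u)" .
    then show ?thesis using union_bound[OF lf E p, of r v] False unfolding gM_def h_def by simp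
  qed
  have "(\<Sum>v<n. hP p E r (G,v)) \<le> (\<Sum>v<n. gM (2*r) M (G,v) + (\<Sum>u<n. c v u * h u))"
    using per by (intro sum_mono) auto
  also have "\<dots> = (\<Sum>v<n. gM (2*r) M (G,v)) + (\<Sum>u<n. h u * (\<Sum>v<n. c v u))"
  proof -
    have "(\<Sum>v<n. \<Sum>u<n. c v u * h u) = (\<Sum>u<n. \<Sum>v<n. c v u * h u)" by (rule sum.swap)
    also have "\<dots> = (\<Sum>u<n. h u * (\<Sum>v<n. c v u))" by (simp add: sum_distrib_left mult.commute)
    finally show ?thesis by (simp add: sum.distrib)
  qed
  also have "(\<Sum>u<n. h u * (\<Sum>v<n. c v u)) \<le> (\<Sum>u<n. h u * real M)"
  proof (intro sum_mono mult_left_mono h0)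
    fix u
    have "(\<Sum>v<n. c v u) = real (card {v\<in>{..<n}. u \<in> ball G r v \<and> \<not> M < card (ball G (2*r) v)})"
      unfolding c_def by (simp add: sum.If_cases Int_def)
    then show "(\<Sum>v<n. c v u) \<le> real M" using count_bound[OF fg, of u r M] by simp
  qed
  also have "(\<Sum>u<n. h u * real M) = real M * (\<Sum>u<n. hP p E 0 (G,u))"
    unfolding h_def by (simp add: sum_distrib_left mult.commute)
  finally show ?thesis by simp
qed



theorem mainTheorem15:
  fixes \<mu> :: "rgraph measure" and E :: "rgraph \<Rightarrow> bool"
  assumes "prob_space \<mu>" and "sets \<mu> = sets rg_space" and "local_limit \<mu>"
    and "local_event E"
  shows "\<forall>\<delta>::real>0. \<forall>r::nat. \<exists>D::nat. \<forall>p::real. 0 \<le> p \<and> p \<le> 1 \<longrightarrow>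
     measure (\<mu> \<Otimes>\<^sub>M perc_measure p)
       {z \<in> space (\<mu> \<Otimes>\<^sub>M perc_measure p).
          \<exists>u\<in>ball (fst (fst z)) r (snd (fst z)). E (perc_graph (fst (fst z)) (snd z), u)}
     \<le> real D * measure (\<mu> \<Otimes>\<^sub>M perc_measure p)
       {z \<in> space (\<mu> \<Otimes>\<^sub>M perc_measure p). E (perc_graph (fst (fst z)) (snd z), snd (fst z))}
       + \<delta>"
proof (intro allI impI)
  fix \<delta> :: real and r :: nat assume \<delta>: "0 < \<delta>"
  note prob = assms(1) and S = assms(2)
  interpret mu: prob_space \<mu> by fact
  from assms(4) obtain R where E: "loc R E" unfolding local_event_def loc_def by blast
  from assms(3) obtain Gs where fg: "\<And>n. finite_graph n (Gs n)"
    and lim: "\<And>f. locally_continuous f \<Longrightarrow> bounded_on_lf f \<Longrightarrow>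
        (\<lambda>n. (\<Sum>v<n. f (Gs n, v)) / real n) \<longlonglongrightarrow> integral\<^sup>L \<mu> f"
    unfolding local_limit_def by blast
  have "eventually (\<lambda>M. integral\<^sup>L \<mu> (gM (2*r) M) < \<delta>) sequentially"
    using order_tendstoD(2)[OF tight[OF prob S, of "2*r"] \<delta>] .
  then obtain M where M: "integral\<^sup>L \<mu> (gM (2*r) M) < \<delta>"
    unfolding eventually_sequentially by auto
  show "\<exists>D::nat. \<forall>p::real. 0 \<le> p \<and> p \<le> 1 \<longrightarrow>
     measure (\<mu> \<Otimes>\<^sub>M perc_measure p)
       {z \<in> space (\<mu> \<Otimes>\<^sub>M perc_measure p).
          \<exists>u\<in>ball (fst (fst z)) r (snd (fst z)). E (perc_graph (fst (fst z)) (snd z), u)}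
     \<le> real D * measure (\<mu> \<Otimes>\<^sub>M perc_measure p)
       {z \<in> space (\<mu> \<Otimes>\<^sub>M perc_measure p). E (perc_graph (fst (fst z)) (snd z), snd (fst z))}
       + \<delta>"
  proof (intro exI[of _ M] allI impI)
    fix p :: real assume "0 \<le> p \<and> p \<le> 1"
    then have p: "0 \<le> p" "p \<le> 1" by auto
    let ?P = "perc_measure p"
    have sets_eq: "sets (\<mu> \<Otimes>\<^sub>M ?P) = sets (rg_space \<Otimes>\<^sub>M ?P)" using S by (rule sets_pair_measure_cong) simp
    have sp_eq: "space (\<mu> \<Otimes>\<^sub>M ?P) = space (rg_space \<Otimes>\<^sub>M ?P)" by (rule sets_eq_imp_space_eq[OF sets_eq])
    have S1: "{z \<in> space (\<mu> \<Otimes>\<^sub>M ?P).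
          \<exists>u\<in>ball (fst (fst z)) r (snd (fst z)). E (perc_graph (fst (fst z)) (snd z), u)} \<in> sets (\<mu> \<Otimes>\<^sub>M ?P)"
      unfolding sets_eq sp_eq by (rule sets_S1[OF E])
    have S0: "{z \<in> space (\<mu> \<Otimes>\<^sub>M ?P). E (perc_graph (fst (fst z)) (snd z), snd (fst z))} \<in> sets (\<mu> \<Otimes>\<^sub>M ?P)"
      unfolding sets_eq sp_eq by (rule sets_S0[OF E])
    have L: "measure (\<mu> \<Otimes>\<^sub>M ?P) {z \<in> space (\<mu> \<Otimes>\<^sub>M ?P).
          \<exists>u\<in>ball (fst (fst z)) r (snd (fst z)). E (perc_graph (fst (fst z)) (snd z), u)} = integral\<^sup>L \<mu> (hP p E r)"
      using fubini_meas[OF prob prob_perc[of p] space_perc[of p],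
          of "\<lambda>x \<omega>. \<exists>u\<in>ball (fst x) r (snd x). E (perc_graph (fst x) \<omega>, u)", OF S1]
      unfolding hP_def by simp
    have R0: "measure (\<mu> \<Otimes>\<^sub>M ?P) {z \<in> space (\<mu> \<Otimes>\<^sub>M ?P). E (perc_graph (fst (fst z)) (snd z), snd (fst z))}
        = integral\<^sup>L \<mu> (hP p E 0)"
    proof -
      have "measure (\<mu> \<Otimes>\<^sub>M ?P) {z \<in> space (\<mu> \<Otimes>\<^sub>M ?P). E (perc_graph (fst (fst z)) (snd z), snd (fst z))}
          = (\<integral>x. measure ?P {\<omega>. E (perc_graph (fst x) \<omega>, snd x)} \<partial>\<mu>)"
        using fubini_meas[OF prob prob_perc[of p] space_perc[of p], of "\<lambda>x \<omega>. E (perc_graph (fst x) \<omega>, snd x)", OF S0] by simp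
      also have "\<dots> = integral\<^sup>L \<mu> (hP p E 0)"
      proof -
        have "(\<lambda>x. measure ?P {\<omega>. E (perc_graph (fst x) \<omega>, snd x)}) = hP p E 0"
        proof
          fix x :: rgraph
          obtain G u where x: "x = (G,u)" by (cases x)
          show "measure ?P {\<omega>. E (perc_graph (fst x) \<omega>, snd x)} = hP p E 0 x"
            unfolding x hP0_eq by simp
        qed
        then show ?thesis by simp
      qed
      finally show ?thesis .
    qed
    define a where "a n = (\<Sum>v<n. hP p E r (Gs n, v)) / real n" for n
    define b where "b n = (\<Sum>v<n. gM (2*r) M (Gs n, v)) / real n" for n
    define c where "c n = (\<Sum>v<n. hP p E 0 (Gs n, v)) / real n" for n
    have la: "a \<longlonglongrightarrow> integral\<^sup>L \<mu> (hP p E r)" unfolding a_def using hP_cont[OF E p] by (intro lim)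
    have lb: "b \<longlonglongrightarrow> integral\<^sup>L \<mu> (gM (2*r) M)" unfolding b_def using gM_cont by (intro lim)
    have lc: "c \<longlonglongrightarrow> integral\<^sup>L \<mu> (hP p E 0)" unfolding c_def using hP_cont[OF E p] by (intro lim)
    have le: "a n \<le> b n + real M * c n" for n
    proof -
      have "(\<Sum>v<n. hP p E r (Gs n, v)) / real n \<le> ((\<Sum>v<n. gM (2*r) M (Gs n,v)) + real M * (\<Sum>u<n. hP p E 0 (Gs n,u))) / real n"
        by (intro divide_right_mono finite_ineq[OF fg E p]) simp
      then show ?thesis unfolding a_def b_def c_def by (simp add: add_divide_distrib)
    qed
    have "integral\<^sup>L \<mu> (hP p E r) \<le> integral\<^sup>L \<mu> (gM (2*r) M) + real M * integral\<^sup>L \<mu> (hP p E 0)"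
      by (rule LIMSEQ_le[OF la tendsto_add[OF lb tendsto_mult_left[OF lc]]]) (simp add: le)
    then show "measure (\<mu> \<Otimes>\<^sub>M ?P) {z \<in> space (\<mu> \<Otimes>\<^sub>M ?P).
          \<exists>u\<in>ball (fst (fst z)) r (snd (fst z)). E (perc_graph (fst (fst z)) (snd z), u)}
       \<le> real M * measure (\<mu> \<Otimes>\<^sub>M ?P) {z \<in> space (\<mu> \<Otimes>\<^sub>M ?P). E (perc_graph (fst (fst z)) (snd z), snd (fst z))} + \<delta>"
      unfolding L R0 using M by simp
  qed
qed


end
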